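(* Let $j>0$ and $a_0,\dots,a_j\in\mathbb{Z}$, and let $p(t)=a_0+a_1t+\cdots+a_jt^j$. Suppose there is an integer polynomial $q(t)=b_0+b_1t+\cdots+b_\ell t^\ell$ with $p(t)\,q(t)=1-t^{j+\ell}$. For each integer $n\ge j+1$ let $G_n$ be the abelian group with generators $x_i$, $i\in\mathbb{Z}/n\mathbb{Z}$, and relations $a_0x_i+a_1x_{i+1}+\cdots+a_jx_{i+j}=0$ for every $i\in\mathbb{Z}/n\mathbb{Z}$. Then $G_n\cong G_{n+j+\ell}$ for every $n\ge j+1$. *)

theory Defs
  imports "HOL-Algebra.Algebra" "HOL-Computational_Algebra.Polynomial"
begin

text \<open>The free abelian group Z^n on generators x_0,...,x_{n-1} (indices read mod n),
  as the additive group of integer vectors indexed by {0..<n} (functions vanishing outside).\<close>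
definition Zvec :: "nat \<Rightarrow> (nat \<Rightarrow> int) monoid" where
  "Zvec n = \<lparr>partial_object.carrier = {f. \<forall>k\<ge>n. f k = 0},
             monoid.mult = (\<lambda>f g k. f k + g k),
             monoid.one = (\<lambda>k. 0)\<rparr>"

definition relvec :: "int poly \<Rightarrow> nat \<Rightarrow> nat \<Rightarrow> nat \<Rightarrow> (nat \<Rightarrow> int)" where
  "relvec p j n i = (\<lambda>k. if k < n then (\<Sum>m\<le>j. if (i + m) mod n = k then coeff p m else 0) else 0)"

definition Gpres :: "int poly \<Rightarrow> nat \<Rightarrow> nat \<Rightarrow> (nat \<Rightarrow> int) set monoid" where
  "Gpres p j n = Zvec n Mod generate (Zvec n) (relvec p j n ` {..<n})"

end

theory Submission
  imports Defs
begin
definition EE :: "nat \<Rightarrow> nat \<Rightarrow> nat \<Rightarrow> int" where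
  "EE M u = (\<lambda>x. if x = u mod M then 1 else 0)"

lemma Zvec_simps[simp]:
  "carrier (Zvec M) = {f. \<forall>k\<ge>M. f k = 0}"
  "f \<otimes>\<^bsub>Zvec M\<^esub> g = (\<lambda>k. f k + g k)"
  "\<one>\<^bsub>Zvec M\<^esub> = (\<lambda>k. 0)"
  by (simp_all add: Zvec_def)

lemma Zvec_comm_group: "comm_group (Zvec M)"
proof (rule comm_groupI, simp_all)
  fix x :: "nat \<Rightarrow> int" assume "\<forall>k\<ge>M. x k = 0"
  then show "\<exists>y. (\<forall>k\<ge>M. y k = 0) \<and> (\<lambda>k. y k + x k) = (\<lambda>k. 0)"
    by (intro exI[of _ "\<lambda>k. - x k"]) auto
qed (auto simp: algebra_simps)

lemma Zvec_inv: assumes "f \<in> carrier (Zvec M)" shows "inv\<^bsub>Zvec M\<^esub> f = (\<lambda>k. - f k)"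
proof -
  interpret comm_group "Zvec M" by (rule Zvec_comm_group)
  show ?thesis using assms by (intro inv_equality) auto
qed
definition RR :: "int poly \<Rightarrow> nat \<Rightarrow> nat \<Rightarrow> (nat \<Rightarrow> int) set" where
  "RR p j M = generate (Zvec M) (relvec p j M ` {..<M})"

lemma relvec_carrier: "relvec p j M i \<in> carrier (Zvec M)"
  by (auto simp: relvec_def)

lemma RR_subgroup: "subgroup (RR p j M) (Zvec M)"
proof -
  interpret comm_group "Zvec M" by (rule Zvec_comm_group)
  show ?thesis unfolding RR_def by (rule generate_is_subgroup) (use relvec_carrier in blast)
qed

lemma RR_carrier: "f \<in> RR p j M \<Longrightarrow> \<forall>k\<ge>M. f k = 0"
  using subgroup.subset[OF RR_subgroup] by fastforce

lemma RR_zero: "(\<lambda>k. 0) \<in> RR p j M"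
  using subgroup.one_closed[OF RR_subgroup] by simp

lemma RR_add: "f \<in> RR p j M \<Longrightarrow> g \<in> RR p j M \<Longrightarrow> (\<lambda>k. f k + g k) \<in> RR p j M"
  using subgroup.m_closed[OF RR_subgroup] by fastforce

lemma RR_neg: "f \<in> RR p j M \<Longrightarrow> (\<lambda>k. - f k) \<in> RR p j M"
proof -
  assume f: "f \<in> RR p j M"
  have "inv\<^bsub>Zvec M\<^esub> f \<in> RR p j M" using subgroup.m_inv_closed[OF RR_subgroup f] .
  moreover have "f \<in> carrier (Zvec M)" using subgroup.subset[OF RR_subgroup] f by blast
  ultimately show ?thesis using Zvec_inv by simp
qed

lemma RR_natmult: assumes f: "f \<in> RR p j M" shows "(\<lambda>k. int c * f k) \<in> RR p j M"
proof (induction c)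
  case 0 then show ?case using RR_zero by simp
next
  case (Suc c)
  have "(\<lambda>k. int (Suc c) * f k) = (\<lambda>k. int c * f k + f k)" by (simp add: algebra_simps)
  then show ?case using RR_add[OF Suc.IH f] by simp
qed

lemma RR_mult: assumes f: "f \<in> RR p j M" shows "(\<lambda>k. c * f k) \<in> RR p j M"
proof (cases "c \<ge> 0")
  case True
  then have "c = int (nat c)" by simp
  then show ?thesis using RR_natmult[OF f, of "nat c"] by simp
next
  case False
  then have "c = - int (nat (-c))" by simp
  then have "(\<lambda>k. c * f k) = (\<lambda>k. - (int (nat (-c)) * f k))" by (metis mult_minus_left)
  then show ?thesis using RR_neg[OF RR_natmult[OF f, of "nat (-c)"]] by simp
qed

lemma RR_sum: "finite I \<Longrightarrow> (\<And>i. i \<in> I \<Longrightarrow> F i \<in> RR p j M) \<Longrightarrow> (\<lambda>k. \<Sum>i\<in>I. F i k) \<in> RR p j M"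
proof (induction I rule: finite_induct)
  case empty then show ?case using RR_zero by simp
next
  case (insert x I)
  then show ?case using RR_add[of "F x" p j M "\<lambda>k. \<Sum>i\<in>I. F i k"] by simp
qed

lemma relvec_mod: "M > 0 \<Longrightarrow> relvec p j M i = relvec p j M (i mod M)"
  unfolding relvec_def by (intro ext if_cong refl sum.cong) (simp add: mod_add_left_eq)

lemma relvec_RR: assumes "M > 0" shows "relvec p j M i \<in> RR p j M"
proof -
  have "relvec p j M (i mod M) \<in> RR p j M" unfolding RR_def
    by (rule generate.incl) (use assms in simp)
  then show ?thesis using relvec_mod[OF assms] by simp
qed

lemma relvec_EE: "M > 0 \<Longrightarrow> relvec p j M i = (\<lambda>x. \<Sum>m\<le>j. coeff p m * EE M (i+m) x)"
proof (rule ext)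
  fix x assume M: "M > 0"
  show "relvec p j M i x = (\<Sum>m\<le>j. coeff p m * EE M (i+m) x)"
  proof (cases "x < M")
    case True then show ?thesis unfolding relvec_def EE_def
      by (simp add: if_distrib eq_commute cong: if_cong)
  next
    case False
    then have "\<And>m. x \<noteq> (i+m) mod M" using M by (metis mod_less_divisor)
    then show ?thesis using False unfolding relvec_def EE_def by simp
  qed
qed

lemma EE_carrier: assumes "M > 0" "x \<ge> M" shows "EE M u x = 0"
proof -
  have "u mod M < M" using assms by simp
  then have "x \<noteq> u mod M" using assms by linarith
  then show ?thesis unfolding EE_def by auto
qed


lemma conv:
  fixes p q :: "int poly" and H :: "nat \<Rightarrow> int"
  assumes "degree p \<le> j" "degree q \<le> l"
  shows "(\<Sum>r\<le>l. \<Sum>m\<le>j. coeff q r * coeff p m * H (m+r)) = (\<Sum>d\<le>j+l. coeff (p*q) d * H d)"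
proof -
  define g where "g i r = coeff p i * coeff q r * H (i+r)" for i r
  have "(\<Sum>d\<le>j+l. coeff (p*q) d * H d) = (\<Sum>d\<le>j+l. \<Sum>i\<le>d. g i (d - i))"
    by (auto simp: coeff_mult sum_distrib_right g_def intro!: sum.cong)
  also have "\<dots> = (\<Sum>(i,r)\<in>{(i,r). i+r \<le> j+l}. g i r)"
    by (rule sum.triangle_reindex_eq[symmetric])
  also have "\<dots> = (\<Sum>(i,r)\<in>{..j}\<times>{..l}. g i r)"
  proof (rule sum.mono_neutral_right)
    have "{(i,r). i+r \<le> j+l} \<subseteq> {..j+l}\<times>{..j+l}" by auto
    then show "finite {(i,r). i+r \<le> j+l}" by (rule finite_subset) auto
    show "{..j}\<times>{..l} \<subseteq> {(i,r). i+r \<le> j+l}" by auto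
    show "\<forall>x\<in>{(i,r). i+r \<le> j+l} - {..j}\<times>{..l}. (case x of (i,r) \<Rightarrow> g i r) = 0"
    proof
      fix x assume "x \<in> {(i,r). i+r \<le> j+l} - {..j}\<times>{..l}"
      then obtain i r where x: "x = (i,r)" and "i > j \<or> r > l" by (cases x) (auto simp: not_le)
      then have "coeff p i = 0 \<or> coeff q r = 0" using assms by (auto intro!: coeff_eq_0)
      then show "(case x of (i,r) \<Rightarrow> g i r) = 0" using x by (auto simp: g_def)
    qed
  qed
  also have "\<dots> = (\<Sum>i\<le>j. \<Sum>r\<le>l. g i r)" by (rule sum.cartesian_product[symmetric])
  also have "\<dots> = (\<Sum>r\<le>l. \<Sum>i\<le>j. g i r)" by (rule sum.swap)
  finally show ?thesis by (simp add: g_def mult.commute mult.left_commute)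
qed

lemma Qfact:
  fixes p q :: "int poly"
  assumes M: "M > 0" and jl: "j + l > 0" and dp: "degree p \<le> j" and dq: "degree q \<le> l"
    and pq: "p * q = 1 - monom 1 (j + l)"
  shows "(\<lambda>x. EE M a x - EE M (a + (j+l)) x) \<in> RR p j M"
proof -
  have mem: "(\<lambda>x. \<Sum>r\<le>l. coeff q r * relvec p j M (a+r) x) \<in> RR p j M"
    by (rule RR_sum) (auto intro!: RR_mult relvec_RR M)
  have "(\<lambda>x. \<Sum>r\<le>l. coeff q r * relvec p j M (a+r) x) = (\<lambda>x. EE M a x - EE M (a + (j+l)) x)"
  proof
    fix x
    define H where "H d = EE M (a+d) x" for d
    have "(\<Sum>r\<le>l. coeff q r * relvec p j M (a+r) x) = (\<Sum>r\<le>l. \<Sum>m\<le>j. coeff q r * coeff p m * H (m+r))"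
      by (simp add: relvec_EE[OF M] sum_distrib_left H_def mult.assoc add.commute add.left_commute)
    also have "\<dots> = (\<Sum>d\<le>j+l. coeff (p*q) d * H d)" by (rule conv[OF dp dq])
    also have "\<dots> = (\<Sum>d\<le>j+l. (if d = 0 then H d else 0) - (if d = j+l then H d else 0))"
      using jl by (intro sum.cong) (auto simp: pq coeff_monom)
    also have "\<dots> = H 0 - H (j+l)" by (simp add: sum_subtractf)
    finally show "(\<Sum>r\<le>l. coeff q r * relvec p j M (a+r) x) = EE M a x - EE M (a + (j+l)) x"
      by (simp add: H_def)
  qed
  then show ?thesis using mem by simp
qed


definition Rel :: "int poly \<Rightarrow> nat \<Rightarrow> nat \<Rightarrow> nat \<Rightarrow> nat \<Rightarrow> bool" where
  "Rel p j M u v \<longleftrightarrow> (\<lambda>x. EE M u x - EE M v x) \<in> RR p j M"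

lemma Rel_mod: "u mod M = v mod M \<Longrightarrow> Rel p j M u v"
  unfolding Rel_def EE_def using RR_zero by simp

lemma Rel_sym: "Rel p j M u v \<Longrightarrow> Rel p j M v u"
  unfolding Rel_def using RR_neg by fastforce

lemma Rel_trans: "Rel p j M u v \<Longrightarrow> Rel p j M v w \<Longrightarrow> Rel p j M u w"
  unfolding Rel_def using RR_add by fastforce

context
  fixes p q :: "int poly" and j l :: nat
  assumes jl: "j + l > 0" and dp: "degree p \<le> j" and dq: "degree q \<le> l"
    and pq: "p * q = 1 - monom 1 (j + l)"
begin

lemma Rel_shift: "M > 0 \<Longrightarrow> Rel p j M a (a + (j+l) * cc)"
proof (induction cc)
  case 0 then show ?case by (simp add: Rel_mod)
next
  case (Suc c)
  have "Rel p j M (a + (j+l)* c) (a + (j+l)* c + (j+l))"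
    unfolding Rel_def using Qfact[OF Suc.prems jl dp dq pq] by simp
  then show ?case using Rel_trans[OF Suc.IH[OF Suc.prems]] by (simp add: algebra_simps)
qed

lemma Rel_a: assumes n: "n > 0" shows "Rel p j n (u mod (n+j+l)) u"
proof -
  define N where "N = n+j+l"
  define w where "w = u mod N"
  define c where "c = u div N"
  have "u = w + N * c" using mod_mult_div_eq[of u N] by (simp add: w_def c_def)
  then have u: "u = w + (j+l) * c + n * c" by (simp add: N_def algebra_simps)
  have 1: "Rel p j n w (w + (j+l) * c)" by (rule Rel_shift[OF n])
  have "(w + (j+l) * c) mod n = u mod n" using u by simp
  then have 2: "Rel p j n (w + (j+l) * c) u" by (rule Rel_mod)
  show ?thesis using Rel_trans[OF 1 2] unfolding w_def N_def .
qed

lemma Rel_b: assumes n: "n > 0" shows "Rel p j (n+j+l) (u mod n) u"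
proof -
  define N where "N = n+j+l"
  define w where "w = u mod n"
  define c where "c = u div n"
  have u: "u = w + n * c" using mod_mult_div_eq[of u n] by (simp add: w_def c_def)
  obtain k where k: "j + l = Suc k" using jl by (cases "j+l") auto
  have e: "(j+l) * (N-1) = N * k + n" unfolding N_def using k by (simp add: algebra_simps)
  have N: "N > 0" using n unfolding N_def by simp
  have 1: "Rel p j N w (w + (j+l) * ((N-1) * c))" by (rule Rel_shift[OF N])
  have "(j+l) * ((N-1) * c) = (N * k + n) * c" using e by (simp flip: mult.assoc)
  then have "w + (j+l) * ((N-1) * c) = u + N * (k * c)" using u by (simp add: algebra_simps)
  then have "(w + (j+l) * ((N-1) * c)) mod N = u mod N" by simp
  then have 2: "Rel p j N (w + (j+l) * ((N-1) * c)) u" by (rule Rel_mod)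
  show ?thesis using Rel_trans[OF 1 2] unfolding w_def N_def .
qed

end


lemma lin:
  assumes "finite I" "\<And>i. i \<in> I \<Longrightarrow> Rel p j M (u i) (v i)"
  shows "(\<lambda>x. (\<Sum>i\<in>I. c i * EE M (u i) x) - (\<Sum>i\<in>I. c i * EE M (v i) x)) \<in> RR p j M"
proof -
  have "(\<lambda>x. \<Sum>i\<in>I. c i * (EE M (u i) x - EE M (v i) x)) \<in> RR p j M"
    using assms by (intro RR_sum RR_mult) (auto simp: Rel_def)
  then show ?thesis by (simp add: sum_subtractf right_diff_distrib)
qed

definition Fold :: "nat \<Rightarrow> nat \<Rightarrow> (nat \<Rightarrow> int) \<Rightarrow> (nat \<Rightarrow> int)" where
  "Fold n N f = (\<lambda>k. \<Sum>i<N. f i * EE n i k)"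

lemma sum_EE: "N > 0 \<Longrightarrow> (\<Sum>u<N. EE N w u * g u) = g (w mod N)"
proof -
  assume N: "N > 0"
  have "(\<Sum>u<N. EE N w u * g u) = (\<Sum>u<N. if u = w mod N then g u else 0)"
    by (rule sum.cong) (auto simp: EE_def)
  also have "\<dots> = g (w mod N)" using N by (simp add: sum.delta)
  finally show ?thesis .
qed

lemma F1: assumes "f \<in> carrier (Zvec N)" shows "f = (\<lambda>k. \<Sum>i<N. f i * EE N i k)"
proof
  fix k
  have "(\<Sum>i<N. f i * EE N i k) = (\<Sum>i<N. if i = k then f k else 0)"
    by (rule sum.cong) (auto simp: EE_def)
  also have "\<dots> = f k" using assms by (simp add: sum.delta)
  finally show "f k = (\<Sum>i<N. f i * EE N i k)" by simp
qed

lemma F2: "n > 0 \<Longrightarrow> Fold n N f \<in> carrier (Zvec n)"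
  by (auto simp: Fold_def EE_carrier)

lemma F3: "Fold n N (\<lambda>k. f k + g k) = (\<lambda>k. Fold n N f k + Fold n N g k)"
  by (auto simp: Fold_def sum.distrib distrib_right)

lemma F4: assumes "g \<in> carrier (Zvec n)" "n \<le> N" shows "Fold n N g = g"
proof
  fix k
  have "(\<Sum>i<N. g i * EE n i k) = (\<Sum>i<N. if i = k then g k else 0)"
  proof (rule sum.cong)
    fix i assume "i \<in> {..<N}"
    show "g i * EE n i k = (if i = k then g k else 0)"
      using assms by (cases "i < n") (auto simp: EE_def)
  qed simp
  also have "\<dots> = g k" using assms by (auto simp: sum.delta)
  finally show "Fold n N g k = g k" by (simp add: Fold_def)
qed

lemma EE_nN: "n > 0 \<Longrightarrow> n \<le> N \<Longrightarrow> EE n w = EE N (w mod n)"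
proof -
  assume "n > 0" "n \<le> N"
  then have "w mod n < N" using mod_less_divisor[of n w] by linarith
  then show ?thesis by (auto simp: EE_def fun_eq_iff)
qed


context
  fixes p q :: "int poly" and j l :: nat
  assumes jl: "j + l > 0" and dp: "degree p \<le> j" and dq: "degree q \<le> l"
    and pq: "p * q = 1 - monom 1 (j + l)"
begin

lemma fold_relvec: assumes n: "n > 0" shows "Fold n (n+j+l) (relvec p j (n+j+l) i) \<in> RR p j n"
proof -
  define N where "N = n+j+l"
  have N: "N > 0" using n by (simp add: N_def)
  have eq: "Fold n N (relvec p j N i) = (\<lambda>k. ((\<Sum>m\<le>j. coeff p m * EE n ((i+m) mod N) k)
        - (\<Sum>m\<le>j. coeff p m * EE n (i+m) k)) + relvec p j n i k)"
  proof
    fix k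
    have "Fold n N (relvec p j N i) k = (\<Sum>u<N. \<Sum>m\<le>j. coeff p m * (EE N (i+m) u * EE n u k))"
      by (simp add: Fold_def relvec_EE[OF N] sum_distrib_right mult.assoc)
    also have "\<dots> = (\<Sum>m\<le>j. coeff p m * (\<Sum>u<N. EE N (i+m) u * EE n u k))"
      by (subst sum.swap) (simp add: sum_distrib_left)
    also have "\<dots> = (\<Sum>m\<le>j. coeff p m * EE n ((i+m) mod N) k)"
      by (simp add: sum_EE[OF N])
    finally show "Fold n N (relvec p j N i) k = ((\<Sum>m\<le>j. coeff p m * EE n ((i+m) mod N) k)
        - (\<Sum>m\<le>j. coeff p m * EE n (i+m) k)) + relvec p j n i k"
      by (simp add: relvec_EE[OF n])
  qed
  have "(\<lambda>k. (\<Sum>m\<le>j. coeff p m * EE n ((i+m) mod N) k) - (\<Sum>m\<le>j. coeff p m * EE n (i+m) k)) \<in> RR p j n"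
    by (rule lin) (auto simp: N_def intro: Rel_a[OF jl dp dq pq n])
  then show ?thesis using RR_add[OF _ relvec_RR[OF n]] eq unfolding N_def by simp
qed

lemma RRsub: assumes n: "n > 0" shows "RR p j n \<subseteq> RR p j (n+j+l)"
proof
  define N where "N = n+j+l"
  have N: "N > 0" and nN: "n \<le> N" using n by (auto simp: N_def)
  have gen: "relvec p j n i \<in> RR p j N" for i
  proof -
    have eq: "relvec p j n i = (\<lambda>k. ((\<Sum>m\<le>j. coeff p m * EE N ((i+m) mod n) k)
        - (\<Sum>m\<le>j. coeff p m * EE N (i+m) k)) + relvec p j N i k)"
      by (simp add: relvec_EE[OF n] relvec_EE[OF N] EE_nN[OF n nN])
    have "(\<lambda>k. (\<Sum>m\<le>j. coeff p m * EE N ((i+m) mod n) k) - (\<Sum>m\<le>j. coeff p m * EE N (i+m) k)) \<in> RR p j N"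
      by (rule lin) (auto simp: N_def intro: Rel_b[OF jl dp dq pq n])
    then show ?thesis using RR_add[OF _ relvec_RR[OF N]] eq by simp
  qed
  fix f assume "f \<in> RR p j n"
  then have "f \<in> generate (Zvec n) (relvec p j n ` {..<n})" by (simp add: RR_def)
  then show "f \<in> RR p j (n+j+l)" unfolding N_def[symmetric]
  proof (induction rule: generate.induct)
    case one then show ?case using RR_zero by simp
  next
    case (incl h) then show ?case using gen by auto
  next
    case (inv h)
    then have "inv\<^bsub>Zvec n\<^esub> h = (\<lambda>k. - h k)" using relvec_carrier by (auto intro!: Zvec_inv)
    then show ?case using inv gen RR_neg by auto
  next
    case (eng h1 h2) then show ?case using RR_add[OF eng.IH] by simp
  qed
qed

lemma ker_sub:
  assumes n: "n > 0" and f: "f \<in> carrier (Zvec (n+j+l))" and F: "Fold n (n+j+l) f \<in> RR p j n"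
  shows "f \<in> RR p j (n+j+l)"
proof -
  define N where "N = n+j+l"
  have N: "N > 0" and nN: "n \<le> N" using n by (auto simp: N_def)
  have eq: "f = (\<lambda>k. ((\<Sum>i<N. f i * EE N i k) - (\<Sum>i<N. f i * EE N (i mod n) k)) + Fold n N f k)"
    by (subst F1[OF f[folded N_def]]) (simp add: Fold_def EE_nN[OF n nN])
  have "(\<lambda>k. (\<Sum>i<N. f i * EE N i k) - (\<Sum>i<N. f i * EE N (i mod n) k)) \<in> RR p j N"
    by (rule lin) (auto simp: N_def intro: Rel_sym Rel_b[OF jl dp dq pq n])
  moreover have "Fold n N f \<in> RR p j N" using RRsub[OF n] F by (auto simp: N_def)
  ultimately have "(\<lambda>k. ((\<Sum>i<N. f i * EE N i k) - (\<Sum>i<N. f i * EE N (i mod n) k)) + Fold n N f k) \<in> RR p j N"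
    by (rule RR_add)
  then show ?thesis using eq unfolding N_def by simp
qed

end


theorem theorem5p5:
  fixes p q :: "int poly" and j l n :: nat
  assumes "j > 0"
    and "degree p \<le> j"
    and "degree q \<le> l"
    and "p * q = 1 - monom 1 (j + l)"
    and "n \<ge> j + 1"
  shows "Gpres p j n \<cong> Gpres p j (n + j + l)"
proof -
  note jl = \<open>j > 0\<close>[THEN trans_less_add1[of 0 j l]]
  note dp = assms(2) and dq = assms(3) and pq = assms(4)
  define N where "N = n+j+l"
  have n: "n > 0" using assms(5) by simp
  have N: "N > 0" and nN: "n \<le> N" using n by (auto simp: N_def)
  have gn: "group (Zvec n)" and gN: "group (Zvec N)"
    using comm_group.axioms(2)[OF Zvec_comm_group] by auto
  have sgn: "subgroup (RR p j n) (Zvec n)" by (rule RR_subgroup)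
  have nrm: "RR p j n \<lhd> Zvec n" by (rule comm_group.subgroup_imp_normal[OF Zvec_comm_group sgn])
  have sgN: "subgroup (RR p j N) (Zvec N)" by (rule RR_subgroup)
  have nrmN: "RR p j N \<lhd> Zvec N" by (rule comm_group.subgroup_imp_normal[OF Zvec_comm_group sgN])
  define h where "h f = RR p j n #>\<^bsub>Zvec n\<^esub> Fold n N f" for f
  have hcar: "h f \<in> carrier (Zvec n Mod RR p j n)" for f
    unfolding h_def FactGroup_def using group.rcosetsI[OF gn subgroup.subset[OF sgn] F2[OF n]] by simp
  have hom: "group_hom (Zvec N) (Zvec n Mod RR p j n) h"
  proof (unfold group_hom_def group_hom_axioms_def, intro conjI)
    show "group (Zvec N)" by (rule gN)
    show "group (Zvec n Mod RR p j n)" by (rule normal.factorgroup_is_group[OF nrm])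
    show "h \<in> hom (Zvec N) (Zvec n Mod RR p j n)"
    proof (rule homI)
      fix f assume "f \<in> carrier (Zvec N)"
      show "h f \<in> carrier (Zvec n Mod RR p j n)" by (rule hcar)
    next
      fix f g assume "f \<in> carrier (Zvec N)" "g \<in> carrier (Zvec N)"
      have "h f \<otimes>\<^bsub>Zvec n Mod RR p j n\<^esub> h g = h f <#>\<^bsub>Zvec n\<^esub> h g"
        by (simp add: FactGroup_def)
      also have "\<dots> = RR p j n #>\<^bsub>Zvec n\<^esub> (Fold n N f \<otimes>\<^bsub>Zvec n\<^esub> Fold n N g)"
        unfolding h_def by (rule normal.rcos_sum[OF nrm F2[OF n] F2[OF n]])
      also have "\<dots> = h (f \<otimes>\<^bsub>Zvec N\<^esub> g)" by (simp add: h_def F3)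
      finally show "h (f \<otimes>\<^bsub>Zvec N\<^esub> g) = h f \<otimes>\<^bsub>Zvec n Mod RR p j n\<^esub> h g" by simp
    qed
  qed
  have surj: "h ` carrier (Zvec N) = carrier (Zvec n Mod RR p j n)"
  proof
    show "h ` carrier (Zvec N) \<subseteq> carrier (Zvec n Mod RR p j n)" using hcar by auto
    show "carrier (Zvec n Mod RR p j n) \<subseteq> h ` carrier (Zvec N)"
    proof
      fix Y assume "Y \<in> carrier (Zvec n Mod RR p j n)"
      then obtain g where g: "g \<in> carrier (Zvec n)" and Y: "Y = RR p j n #>\<^bsub>Zvec n\<^esub> g"
        by (auto simp: FactGroup_def RCOSETS_def)
      have gN: "g \<in> carrier (Zvec N)" using g nN by auto
      have "h g = Y" unfolding h_def Y using F4[OF g nN] by simp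
      then show "Y \<in> h ` carrier (Zvec N)" using gN by blast
    qed
  qed
  have ker: "kernel (Zvec N) (Zvec n Mod RR p j n) h = RR p j N"
  proof
    show "kernel (Zvec N) (Zvec n Mod RR p j n) h \<subseteq> RR p j N"
    proof
      fix f assume "f \<in> kernel (Zvec N) (Zvec n Mod RR p j n) h"
      then have f: "f \<in> carrier (Zvec N)" and hf: "h f = RR p j n"
        by (auto simp: kernel_def FactGroup_def)
      have "Fold n N f \<in> RR p j n"
        using group.rcos_self[OF gn F2[OF n, of N f] sgn] hf unfolding h_def by simp
      then show "f \<in> RR p j N" using ker_sub[OF jl dp dq pq n] f unfolding N_def by blast
    qed
    show "RR p j N \<subseteq> kernel (Zvec N) (Zvec n Mod RR p j n) h"
      unfolding RR_def[of p j N]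
    proof (rule group.generate_subgroup_incl[OF gN])
      show "subgroup (kernel (Zvec N) (Zvec n Mod RR p j n) h) (Zvec N)"
        by (rule group_hom.subgroup_kernel[OF hom])
      show "relvec p j N ` {..<N} \<subseteq> kernel (Zvec N) (Zvec n Mod RR p j n) h"
      proof
        fix f assume "f \<in> relvec p j N ` {..<N}"
        then obtain i where fi: "f = relvec p j N i" by auto
        have "Fold n N f \<in> RR p j n" using fold_relvec[OF jl dp dq pq n] fi unfolding N_def by blast
        then have "h f = RR p j n" unfolding h_def by (rule subgroup.rcos_const[OF sgn gn])
        then show "f \<in> kernel (Zvec N) (Zvec n Mod RR p j n) h"
          using fi relvec_carrier by (auto simp: kernel_def FactGroup_def)
      qed
    qed
  qed
  have "Zvec N Mod RR p j N \<cong> Zvec n Mod RR p j n"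
    using group_hom.FactGroup_iso[OF hom surj] ker by simp
  then have "Zvec n Mod RR p j n \<cong> Zvec N Mod RR p j N"
    by (rule group.iso_sym[OF normal.factorgroup_is_group[OF nrmN]])
  then show ?thesis by (simp add: Gpres_def RR_def N_def)
qed

end
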